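(* Let $(X,d)$ be a pointed metric space and let $((x_n,y_n))_{n=1}^\infty$ be a sequence in $\widetilde X$ such that $d(x_n,y_n)\to 0$ as $n\to\infty$. Then for every $\varepsilon\in(0,1)$ there exists a subsequence $((x_{n_k},y_{n_k}))_{k=1}^\infty$ which is Lipschitz interpolating for $\mathrm{Lip}_0(X)$ and whose Lipschitz interpolation constant is at most $1/(1-\varepsilon)$.
   Context: All spaces are real. $(X,d)$ has a base point $0$, $\widetilde{X}=\{(x,y)\in X\times X: x\neq y\}$. $\mathrm{Lip}_0(X)$ is the Banach space of Lipschitz $f:X\to\mathbb{R}$ with $f(0)=0$, normed by $\|f\|=\sup_{(x,y)\in\widetilde X}|f(x)-f(y)|/d(x,y)$. A sequence $((u_k,v_k))_{k=1}^\infty$ in $\widetilde X$ is Lipschitz interpolating for $\mathrm{Lip}_0(X)$ if $T:\mathrm{Lip}_0(X)\to\ell_\infty$, $T(f)=\big((f(u_k)-f(v_k))/d(u_k,v_k)\big)_{k}$, is surjective; its Lipschitz interpolation constant is then $\inf\{K\geq 1: \forall\alpha\in\ell_\infty,\ \|\alpha\|_\infty\le 1,\ \exists f\in\mathrm{Lip}_0(X),\ \|f\|\le K,\ T(f)=\alpha\}$. *)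

theory Defs
  imports "HOL-Analysis.Analysis"
begin

definition Lip0 :: "'a::metric_space \<Rightarrow> ('a \<Rightarrow> real) set" where
  "Lip0 z0 = {f. (\<exists>L. L-lipschitz_on UNIV f) \<and> f z0 = 0}"

definition lipnorm :: "('a::metric_space \<Rightarrow> real) \<Rightarrow> real" where
  "lipnorm f = (SUP p\<in>{(x, y). x \<noteq> y}. \<bar>f (fst p) - f (snd p)\<bar> / dist (fst p) (snd p))"

definition slopes :: "(nat \<Rightarrow> 'a::metric_space) \<Rightarrow> (nat \<Rightarrow> 'a) \<Rightarrow> ('a \<Rightarrow> real) \<Rightarrow> nat \<Rightarrow> real" where
  "slopes u v f = (\<lambda>k. (f (u k) - f (v k)) / dist (u k) (v k))"

definition lip_interpolating :: "'a::metric_space \<Rightarrow> (nat \<Rightarrow> 'a) \<Rightarrow> (nat \<Rightarrow> 'a) \<Rightarrow> bool" where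
  "lip_interpolating z0 u v \<longleftrightarrow>
     (\<forall>\<alpha>::nat \<Rightarrow> real. (\<exists>B. \<forall>k. \<bar>\<alpha> k\<bar> \<le> B) \<longrightarrow> (\<exists>f\<in>Lip0 z0. slopes u v f = \<alpha>))"

definition lip_interp_const :: "'a::metric_space \<Rightarrow> (nat \<Rightarrow> 'a) \<Rightarrow> (nat \<Rightarrow> 'a) \<Rightarrow> real" where
  "lip_interp_const z0 u v = Inf {K. K \<ge> 1 \<and>
     (\<forall>\<alpha>::nat \<Rightarrow> real. (\<forall>k. \<bar>\<alpha> k\<bar> \<le> 1) \<longrightarrow>
        (\<exists>f\<in>Lip0 z0. lipnorm f \<le> K \<and> slopes u v f = \<alpha>))}"

end

theory Submission
  imports Defs
begin


lemma interval_helly: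
  fixes l u :: "'i \<Rightarrow> real"
  assumes "finite I" "\<forall>i\<in>I. \<forall>j\<in>I. l i \<le> u j"
  shows "\<exists>t. \<forall>i\<in>I. l i \<le> t \<and> t \<le> u i"
proof (cases "I = {}")
  case True then show ?thesis by auto
next
  case False
  show ?thesis
  proof (intro exI ballI conjI)
    fix i assume i: "i \<in> I"
    show "l i \<le> Max (l ` I)" using assms(1) i by auto
    obtain k where "k \<in> I" "Max (l ` I) = l k"
      using Max_in[of "l ` I"] assms(1) False by (metis (no_types, lifting) finite_imageI image_iff image_is_empty)
    then show "Max (l ` I) \<le> u i" using assms(2) i by auto
  qed
qed

lemma dep_choice:
  fixes P :: "nat \<Rightarrow> (nat \<Rightarrow> 'b) \<Rightarrow> bool"
  assumes step: "\<And>n g. P n g \<Longrightarrow> \<exists>b. P (Suc n) (g(n:=b))"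
    and base: "P 0 gz"
    and loc: "\<And>n g g'. (\<And>i. i<n \<Longrightarrow> g i = g' i) \<Longrightarrow> P n g \<Longrightarrow> P n g'"
  shows "\<exists>g. \<forall>n. P n g"
proof -
  define h where "h = rec_nat gz (\<lambda>n hn. hn(n := SOME b. P (Suc n) (hn(n:=b))))"
  have h0: "h 0 = gz" and hS: "\<And>n. h (Suc n) = (h n)(n := SOME b. P (Suc n) ((h n)(n:=b)))"
    by (simp_all add: h_def)
  have Ph: "P n (h n)" for n
  proof (induction n)
    case 0 then show ?case using base h0 by simp
  next
    case (Suc n) then show ?case unfolding hS by (rule someI_ex[OF step])
  qed
  have stab: "h m i = h (Suc i) i" if "i < m" for m i
    using that
  proof (induction m)
    case 0 then show ?case by simp
  next
    case (Suc m) then show ?case by (cases "i = m") (auto simp: hS)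
  qed
  define g where "g i = h (Suc i) i" for i
  have "P n g" for n
    by (rule loc[OF _ Ph[of n]]) (metis g_def stab)
  then show ?thesis by blast
qed

lemma mcshane:
  fixes P :: "'i \<Rightarrow> 'a::metric_space" and V :: "'i \<Rightarrow> real"
  assumes lip: "\<And>a b. \<bar>V a - V b\<bar> \<le> K * dist (P a) (P b)" and K: "K \<ge> 0"
  shows "\<exists>F. K-lipschitz_on UNIV F \<and> (\<forall>a. F (P a) = V a)"
proof -
  define F where "F z = Inf (range (\<lambda>a. V a + K * dist z (P a)))" for z
  have bdd: "bdd_below (range (\<lambda>a. V a + K * dist z (P a)))" for z
  proof (rule bdd_belowI2)
    fix a
    have "V (undefined::'i) - V a \<le> K * dist (P (undefined::'i)) (P a)" using lip[of "undefined::'i" a] by linarith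
    also have "\<dots> \<le> K * (dist z (P (undefined::'i)) + dist z (P a))"
      using K by (intro mult_left_mono) (auto intro: dist_triangle3)
    finally show "V (undefined::'i) - K * dist z (P (undefined::'i)) \<le> V a + K * dist z (P a)" by (simp add: algebra_simps)
  qed
  have le: "F z \<le> V a + K * dist z (P a)" for z a
    unfolding F_def by (rule cInf_lower[OF _ bdd]) auto
  have ge: "F z \<ge> c" if "\<And>a. c \<le> V a + K * dist z (P a)" for z c
    unfolding F_def using that by (intro cInf_greatest) auto
  have eq: "F (P a) = V a" for a
  proof (rule antisym)
    show "F (P a) \<le> V a" using le[of "P a" a] by simp
    show "V a \<le> F (P a)"
    proof (rule ge)
      fix b show "V a \<le> V b + K * dist (P a) (P b)" using lip[of a b] by linarith
    qed
  qed
  have one: "F z \<le> F z' + K * dist z z'" for z z'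
  proof -
    have "F z - K * dist z z' \<le> F z'"
    proof (rule ge)
      fix a
      have "K * dist z (P a) \<le> K * (dist z' (P a) + dist z z')"
        using K by (intro mult_left_mono) (metis add.commute dist_commute dist_triangle)
      then show "F z - K * dist z z' \<le> V a + K * dist z' (P a)"
        using le[of z a] by (simp add: algebra_simps)
    qed
    then show ?thesis by simp
  qed
  have "K-lipschitz_on UNIV F"
  proof (rule lipschitz_onI[OF _ K])
    fix z z' :: 'a
    show "dist (F z) (F z') \<le> K * dist z z'"
      using one[of z z'] one[of z' z] by (simp add: dist_real_def dist_commute abs_le_iff)
  qed
  then show ?thesis using eq by blast
qed



definition pt :: "(nat \<Rightarrow> 'a) \<Rightarrow> (nat \<Rightarrow> 'a) \<Rightarrow> bool \<Rightarrow> nat \<Rightarrow> 'a" where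
  "pt u w s i = (if s then u i else w i)"

definition vv :: "(nat \<Rightarrow> 'a::metric_space) \<Rightarrow> (nat \<Rightarrow> 'a) \<Rightarrow> (nat \<Rightarrow> real) \<Rightarrow> (nat \<Rightarrow> real) \<Rightarrow> bool \<Rightarrow> nat \<Rightarrow> real" where
  "vv u w al c s i = (if s then c i + al i * dist (u i) (w i) else c i)"

definition QQ :: "(nat \<Rightarrow> 'a::metric_space) \<Rightarrow> (nat \<Rightarrow> 'a) \<Rightarrow> (nat \<Rightarrow> real) \<Rightarrow> real \<Rightarrow> nat \<Rightarrow> (nat \<Rightarrow> real) \<Rightarrow> bool" where
  "QQ u w al Kn n c \<longleftrightarrow> (\<forall>i<n. \<forall>j<n. \<forall>s t. \<bar>vv u w al c s i - vv u w al c t j\<bar> \<le> Kn * dist (pt u w s i) (pt u w t j))"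

definition CC :: "(nat \<Rightarrow> 'a::metric_space) \<Rightarrow> (nat \<Rightarrow> 'a) \<Rightarrow> real \<Rightarrow> real \<Rightarrow> nat \<Rightarrow> bool" where
  "CC u w Kn K' n \<longleftrightarrow> (\<forall>i<n. \<forall>j<n. \<forall>s t. pt u w s i \<noteq> pt u w t j \<longrightarrow>
      (K'+1) * dist (u n) (w n) \<le> (K' - Kn) * dist (pt u w s i) (pt u w t j))"

lemma step_lemma:
  fixes u w :: "nat \<Rightarrow> 'a::metric_space"
  assumes Q: "QQ u w al Kn n c" and C: "CC u w Kn K' n" and K1: "1 \<le> Kn" and KK: "Kn \<le> K'"
    and al: "\<bar>al n\<bar> \<le> 1"
  shows "\<exists>b. QQ u w al K' (Suc n) (c(n:=b))"
proof -
  define e where "e = dist (u n) (w n)"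
  define p where "p t j = pt u w t j" for t j
  define v where "v t j = vv u w al c t j" for t j
  have e0: "e \<ge> 0" by (simp add: e_def)
  have ae: "\<bar>al n * e\<bar> \<le> e" using al e0 by (simp add: abs_mult mult_left_le_one_le)
  have Qv: "\<bar>v t j - v t' j'\<bar> \<le> Kn * dist (p t j) (p t' j')" if "j < n" "j' < n" for t j t' j'
    using Q that unfolding QQ_def v_def p_def by blast
  have A: "\<bar>v t j - v t' j'\<bar> + e \<le> K' * (dist (w n) (p t j) + dist (u n) (p t' j'))"
    if "j < n" "j' < n" for t j t' j'
  proof (cases "p t j = p t' j'")
    case True
    then have "\<bar>v t j - v t' j'\<bar> \<le> 0" using Qv[OF that, of t t'] by simp
    moreover have "e \<le> dist (w n) (p t j) + dist (u n) (p t' j')"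
      unfolding e_def using True by (metis dist_commute dist_triangle)
    moreover have "dist (w n) (p t j) + dist (u n) (p t' j') \<le> K' * (dist (w n) (p t j) + dist (u n) (p t' j'))"
      using mult_right_mono[of 1 K' "dist (w n) (p t j) + dist (u n) (p t' j')"] K1 KK by simp
    ultimately show ?thesis by linarith
  next
    case False
    define D where "D = dist (p t j) (p t' j')"
    have CD: "(K'+1) * e \<le> (K' - Kn) * D"
      using C False that unfolding CC_def e_def D_def p_def by blast
    have Dle: "D \<le> dist (w n) (p t j) + e + dist (u n) (p t' j')"
    proof -
      have "dist (p t j) (p t' j') \<le> dist (p t j) (w n) + dist (w n) (p t' j')" by (rule dist_triangle)
      moreover have "dist (w n) (p t' j') \<le> dist (w n) (u n) + dist (u n) (p t' j')" by (rule dist_triangle)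
      ultimately show ?thesis unfolding D_def e_def by (simp add: dist_commute)
    qed
    have "\<bar>v t j - v t' j'\<bar> \<le> Kn * D" using Qv[OF that] by (simp add: D_def)
    then have "\<bar>v t j - v t' j'\<bar> + e \<le> K' * (D - e)" using CD by (simp add: algebra_simps)
    also have "\<dots> \<le> K' * (dist (w n) (p t j) + dist (u n) (p t' j'))"
      using K1 KK Dle by (intro mult_left_mono) auto
    finally show ?thesis .
  qed
  define I where "I = (UNIV :: bool set) \<times> (UNIV :: bool set) \<times> {..<n}"
  define lo where "lo = (\<lambda>(f::bool, t::bool, j::nat). if f then v t j - al n * e - K' * dist (u n) (p t j)
                                        else v t j - K' * dist (w n) (p t j))"
  define up where "up = (\<lambda>(f::bool, t::bool, j::nat). if f then v t j - al n * e + K' * dist (u n) (p t j)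
                                        else v t j + K' * dist (w n) (p t j))"
  have fin: "finite I" unfolding I_def by simp
  have B: "\<bar>v t j - v t' j'\<bar> \<le> K' * (dist z (p t j) + dist z (p t' j'))"
    if "j < n" "j' < n" for t j t' j' z
  proof -
    have "\<bar>v t j - v t' j'\<bar> \<le> Kn * dist (p t j) (p t' j')" by (rule Qv[OF that])
    also have "\<dots> \<le> K' * dist (p t j) (p t' j')" using KK by (intro mult_right_mono) auto
    also have "\<dots> \<le> K' * (dist z (p t j) + dist z (p t' j'))"
      using K1 KK by (intro mult_left_mono) (auto intro: dist_triangle3)
    finally show ?thesis .
  qed
  have pw: "\<forall>i\<in>I. \<forall>k\<in>I. lo i \<le> up k"
  proof (intro ballI)
    fix i k assume "i \<in> I" "k \<in> I"
    then obtain f t j f' t' j' where ik: "i = (f,t,j)" "k = (f',t',j')" "j < n" "j' < n"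
      unfolding I_def by auto
    show "lo i \<le> up k"
    proof (cases f; cases f')
      assume "f" "f'" then show ?thesis using B[OF ik(3,4), of t t' "u n"] ik by (simp add: lo_def up_def abs_le_iff dist_commute distrib_left)
    next
      assume "\<not>f" "\<not>f'" then show ?thesis using B[OF ik(3,4), of t t' "w n"] ik by (simp add: lo_def up_def abs_le_iff dist_commute distrib_left)
    next
      assume "f" "\<not>f'" then show ?thesis using A[OF ik(4,3), of t' t] ae ik abs_ge_self[of "v t' j' - v t j"] abs_ge_minus_self[of "v t' j' - v t j"]
        by (simp add: lo_def up_def abs_le_iff dist_commute distrib_left)
    next
      assume "\<not>f" "f'" then show ?thesis using A[OF ik(3,4), of t t'] ae ik abs_ge_self[of "v t j - v t' j'"] abs_ge_minus_self[of "v t j - v t' j'"]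
        by (simp add: lo_def up_def abs_le_iff dist_commute distrib_left)
    qed
  qed
  obtain b where b: "\<forall>i\<in>I. lo i \<le> b \<and> b \<le> up i" using interval_helly[OF fin pw] by blast
  have bw: "\<bar>b - v t j\<bar> \<le> K' * dist (w n) (p t j)" if "j < n" for t j
    using b[rule_format, of "(False,t,j)"] that by (auto simp: I_def lo_def up_def abs_le_iff)
  have bu: "\<bar>b + al n * e - v t j\<bar> \<le> K' * dist (u n) (p t j)" if "j < n" for t j
    using b[rule_format, of "(True,t,j)"] that by (auto simp: I_def lo_def up_def abs_le_iff)
  define c' where "c' = c(n:=b)"
  have v'old: "vv u w al c' t j = v t j" if "j < n" for t j
    using that by (simp add: c'_def v_def vv_def)
  have v'new: "vv u w al c' t n = (if t then b + al n * e else b)" for t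
    by (simp add: c'_def vv_def e_def)
  have pn: "pt u w t n = (if t then u n else w n)" for t by (simp add: pt_def)
  have K'0: "K' \<ge> 1" using K1 KK by simp
  have "QQ u w al K' (Suc n) c'"
    unfolding QQ_def
  proof (intro allI impI)
    fix i j s t assume i: "i < Suc n" and j: "j < Suc n"
    show "\<bar>vv u w al c' s i - vv u w al c' t j\<bar> \<le> K' * dist (pt u w s i) (pt u w t j)"
    proof (cases "i < n"; cases "j < n")
      assume "i < n" "j < n"
      moreover have "Kn * dist (p s i) (p t j) \<le> K' * dist (p s i) (p t j)"
        using KK by (intro mult_right_mono) auto
      ultimately show ?thesis using Qv[of i j s t] v'old[of i s] v'old[of j t]
        by (simp add: p_def)
    next
      assume "i < n" "\<not> j < n"
      then have "j = n" using j by simp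
      then show ?thesis using bw[OF \<open>i<n\<close>, of s] bu[OF \<open>i<n\<close>, of s] v'old[OF \<open>i<n\<close>] v'new pn
        by (cases t) (auto simp: p_def dist_commute abs_minus_commute)
    next
      assume "\<not> i < n" "j < n"
      then have "i = n" using i by simp
      then show ?thesis using bw[OF \<open>j<n\<close>, of t] bu[OF \<open>j<n\<close>, of t] v'old[OF \<open>j<n\<close>] v'new pn
        by (cases s) (auto simp: p_def dist_commute abs_minus_commute)
    next
      assume "\<not> i < n" "\<not> j < n"
      then have "i = n" "j = n" using i j by auto
      moreover have "\<bar>al n * e\<bar> \<le> K' * e" using ae mult_right_mono[OF K'0 e0] by simp
      ultimately show ?thesis using v'new pn
        by (cases s; cases t) (auto simp: e_def dist_commute abs_minus_commute)
    qed
  qed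
  then show ?thesis unfolding c'_def by blast
qed



lemma CC_local:
  assumes "\<And>i. i \<le> k \<Longrightarrow> r i = r' i"
  shows "CC (x \<circ> r) (y \<circ> r) a b k = CC (x \<circ> r') (y \<circ> r') a b k"
proof -
  have e1: "pt (x \<circ> r) (y \<circ> r) s i = pt (x \<circ> r') (y \<circ> r') s i" if "i < k" for s i
    using assms[of i] that by (simp add: pt_def)
  have e2: "(x \<circ> r) k = (x \<circ> r') k" "(y \<circ> r) k = (y \<circ> r') k" using assms[of k] by auto
  show ?thesis unfolding CC_def
  proof (intro iffI allI impI)
    fix i j s t assume H: "\<forall>i<k. \<forall>j<k. \<forall>s t. pt (x \<circ> r) (y \<circ> r) s i \<noteq> pt (x \<circ> r) (y \<circ> r) t j \<longrightarrow>
          (b + 1) * dist ((x \<circ> r) k) ((y \<circ> r) k) \<le> (b - a) * dist (pt (x \<circ> r) (y \<circ> r) s i) (pt (x \<circ> r) (y \<circ> r) t j)"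
      and ij: "i < k" "j < k" and ne: "pt (x \<circ> r') (y \<circ> r') s i \<noteq> pt (x \<circ> r') (y \<circ> r') t j"
    show "(b + 1) * dist ((x \<circ> r') k) ((y \<circ> r') k) \<le> (b - a) * dist (pt (x \<circ> r') (y \<circ> r') s i) (pt (x \<circ> r') (y \<circ> r') t j)"
      using H[rule_format, OF ij, of s t] ne e1[OF ij(1)] e1[OF ij(2)] e2 by simp
  next
    fix i j s t assume H: "\<forall>i<k. \<forall>j<k. \<forall>s t. pt (x \<circ> r') (y \<circ> r') s i \<noteq> pt (x \<circ> r') (y \<circ> r') t j \<longrightarrow>
          (b + 1) * dist ((x \<circ> r') k) ((y \<circ> r') k) \<le> (b - a) * dist (pt (x \<circ> r') (y \<circ> r') s i) (pt (x \<circ> r') (y \<circ> r') t j)"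
      and ij: "i < k" "j < k" and ne: "pt (x \<circ> r) (y \<circ> r) s i \<noteq> pt (x \<circ> r) (y \<circ> r) t j"
    show "(b + 1) * dist ((x \<circ> r) k) ((y \<circ> r) k) \<le> (b - a) * dist (pt (x \<circ> r) (y \<circ> r) s i) (pt (x \<circ> r) (y \<circ> r) t j)"
      using H[rule_format, OF ij, of s t] ne e1[OF ij(1)] e1[OF ij(2)] e2 by simp
  qed
qed

lemma subseq_exists:
  fixes x y :: "nat \<Rightarrow> 'a::metric_space"
  assumes lim: "(\<lambda>n. dist (x n) (y n)) \<longlonglongrightarrow> 0"
    and Ks: "\<And>k. Ks k < Ks (Suc k)" "\<And>k. Ks k \<ge> 1"
  shows "\<exists>r. strict_mono r \<and> (\<forall>k. CC (x \<circ> r) (y \<circ> r) (Ks k) (Ks (Suc k)) k)"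
proof -
  define P where "P n r \<longleftrightarrow> (\<forall>i. Suc i < n \<longrightarrow> r i < r (Suc i)) \<and>
       (\<forall>k<n. CC (x \<circ> r) (y \<circ> r) (Ks k) (Ks (Suc k)) k)" for n and r :: "nat \<Rightarrow> nat"
  have loc: "P n r'" if "\<And>i. i < n \<Longrightarrow> r i = r' i" "P n r" for n r r'
  proof -
    have "CC (x \<circ> r) (y \<circ> r) (Ks k) (Ks (Suc k)) k = CC (x \<circ> r') (y \<circ> r') (Ks k) (Ks (Suc k)) k"
      if "k < n" for k by (rule CC_local) (use that \<open>\<And>i. i < n \<Longrightarrow> r i = r' i\<close> in simp)
    moreover have "r i < r (Suc i) \<longleftrightarrow> r' i < r' (Suc i)" if "Suc i < n" for i
      using that \<open>\<And>i. i < n \<Longrightarrow> r i = r' i\<close> by simp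
    ultimately show ?thesis using \<open>P n r\<close> unfolding P_def by auto
  qed
  have step: "\<exists>b. P (Suc n) (r(n:=b))" if Pn: "P n r" for n r
  proof -
    define Kn where "Kn = Ks n"
    define K' where "K' = Ks (Suc n)"
    define pts where "pts = pt (x \<circ> r) (y \<circ> r)"
    define A where "A = (UNIV :: bool set) \<times> {..<n} \<times> (UNIV :: bool set) \<times> {..<n}"
    define R where "R m q = (case q of (s,i,t,j) \<Rightarrow> pts s i \<noteq> pts t j \<longrightarrow>
         (K'+1) * dist (x m) (y m) \<le> (K' - Kn) * dist (pts s i) (pts t j))" for m q
    have K'pos: "K' + 1 > 0" using Ks(2)[of "Suc n"] by (simp add: K'_def)
    have Kd: "K' - Kn > 0" using Ks(1)[of n] by (simp add: K'_def Kn_def)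
    have ev1: "eventually (\<lambda>m. R m q) sequentially" for q
    proof -
      obtain s i t j where q: "q = (s,i,t,j)" by (cases q) auto
      show ?thesis
      proof (cases "pts s i = pts t j")
        case True then show ?thesis by (simp add: R_def q)
      next
        case False
        define c where "c = (K' - Kn) * dist (pts s i) (pts t j) / (K' + 1)"
        have "c > 0" using False Kd K'pos by (simp add: c_def)
        then have "eventually (\<lambda>m. dist (x m) (y m) < c) sequentially"
          using order_tendstoD(2)[OF lim] by simp
        then show ?thesis
        proof (rule eventually_mono)
          fix m assume "dist (x m) (y m) < c"
          then have "(K'+1) * dist (x m) (y m) \<le> (K'+1) * c" using K'pos by simp
          also have "\<dots> = (K' - Kn) * dist (pts s i) (pts t j)" using K'pos by (simp add: c_def)
          finally show "R m q" by (simp add: R_def q)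
        qed
      qed
    qed
    have "eventually (\<lambda>m. \<forall>q\<in>A. R m q) sequentially"
      by (rule eventually_ball_finite) (auto simp: A_def ev1)
    then obtain N where N: "\<And>m. m \<ge> N \<Longrightarrow> \<forall>q\<in>A. R m q"
      unfolding eventually_sequentially by blast
    define m where "m = max N (Suc (r (n - 1)))"
    have Rm: "\<forall>q\<in>A. R m q" using N by (simp add: m_def)
    define r' where "r' = r(n:=m)"
    have ag: "\<And>i. i < n \<Longrightarrow> r' i = r i" by (simp add: r'_def)
    have mono': "r' i < r' (Suc i)" if "Suc i < Suc n" for i
    proof (cases "Suc i < n")
      case True then show ?thesis using Pn ag by (simp add: P_def r'_def)
    next
      case False then have "i = n - 1" "n > 0" using that by auto
      then show ?thesis by (auto simp add: r'_def m_def)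
    qed
    have CCold: "CC (x \<circ> r') (y \<circ> r') (Ks k) (Ks (Suc k)) k" if "k < n" for k
    proof -
      have "CC (x \<circ> r) (y \<circ> r) (Ks k) (Ks (Suc k)) k" using Pn that by (simp add: P_def)
      moreover have "CC (x \<circ> r) (y \<circ> r) (Ks k) (Ks (Suc k)) k = CC (x \<circ> r') (y \<circ> r') (Ks k) (Ks (Suc k)) k"
        by (rule CC_local) (use ag that in simp)
      ultimately show ?thesis by simp
    qed
    have ptseq: "pt (x \<circ> r') (y \<circ> r') s i = pts s i" if "i < n" for s i
      using ag[OF that] by (simp add: pt_def pts_def)
    have CCnew: "CC (x \<circ> r') (y \<circ> r') (Ks n) (Ks (Suc n)) n"
      unfolding CC_def
    proof (intro allI impI)
      fix i j s t assume ij: "i < n" "j < n" and ne: "pt (x \<circ> r') (y \<circ> r') s i \<noteq> pt (x \<circ> r') (y \<circ> r') t j"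
      have "(s,i,t,j) \<in> A" using ij by (simp add: A_def)
      then have "R m (s,i,t,j)" using Rm by blast
      then show "(Ks (Suc n) + 1) * dist ((x \<circ> r') n) ((y \<circ> r') n)
           \<le> (Ks (Suc n) - Ks n) * dist (pt (x \<circ> r') (y \<circ> r') s i) (pt (x \<circ> r') (y \<circ> r') t j)"
        using ne ptseq[OF ij(1)] ptseq[OF ij(2)] by (simp add: R_def r'_def K'_def Kn_def)
    qed
    have "P (Suc n) r'" unfolding P_def
    proof (intro conjI allI impI)
      fix i assume "Suc i < Suc n" then show "r' i < r' (Suc i)" by (rule mono')
    next
      fix k assume "k < Suc n"
      then consider "k < n" | "k = n" by linarith
      then show "CC (x \<circ> r') (y \<circ> r') (Ks k) (Ks (Suc k)) k"
      proof cases
        case 1 then show ?thesis by (rule CCold)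
      next
        case 2 then show ?thesis using CCnew by simp
      qed
    qed
    then show ?thesis unfolding r'_def by blast
  qed
  have base: "P 0 id" by (simp add: P_def)
  have "\<exists>g. \<forall>n. P n g" by (rule dep_choice[of P id, OF step base loc])
  then obtain r where Pr: "\<forall>n. P n r" by (elim exE)
  have m1: "r i < r (Suc i)" for i
  proof -
    have "P (Suc (Suc i)) r" using Pr by (rule spec)
    then show ?thesis unfolding P_def by (elim conjE allE[of _ i]) simp
  qed
  have m2: "CC (x \<circ> r) (y \<circ> r) (Ks k) (Ks (Suc k)) k" for k
  proof -
    have "P (Suc k) r" using Pr by (rule spec)
    then show ?thesis unfolding P_def by (elim conjE allE[of _ k]) simp
  qed
  show ?thesis using m1 m2 by (auto simp: strict_mono_Suc_iff)
qed

lemma values_exist: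
  fixes u w :: "nat \<Rightarrow> 'a::metric_space"
  assumes C: "\<And>k. CC u w (Ks k) (Ks (Suc k)) k"
    and Ks: "\<And>k. Ks k \<le> Ks (Suc k)" "\<And>k. Ks k \<ge> 1"
    and al: "\<And>k. \<bar>al k\<bar> \<le> 1"
  shows "\<exists>c. \<forall>n. QQ u w al (Ks n) n c"
proof (rule dep_choice[where gz = "\<lambda>_. 0"])
  fix n c assume "QQ u w al (Ks n) n c"
  then show "\<exists>b. QQ u w al (Ks (Suc n)) (Suc n) (c(n := b))"
    using step_lemma[of u w al "Ks n" n c "Ks (Suc n)", OF _ C[of n] Ks(2)[of n] Ks(1)[of n] al[of n]] by blast
next
  show "QQ u w al (Ks 0) 0 (\<lambda>_. 0)" by (simp add: QQ_def)
next
  fix n c c' assume "\<And>i. i < n \<Longrightarrow> c i = c' i" "QQ u w al (Ks n) n c"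
  then show "QQ u w al (Ks n) n c'" unfolding QQ_def vv_def by (metis (no_types, lifting))
qed



lemma interp_core:
  fixes z0 :: "'a::metric_space" and u w :: "nat \<Rightarrow> 'a"
  assumes ne: "\<And>n. u n \<noteq> w n"
    and C: "\<And>k. CC u w (Ks k) (Ks (Suc k)) k"
    and Ks: "\<And>k. Ks k \<le> Ks (Suc k)" "\<And>k. Ks k \<ge> 1" "\<And>k. Ks k \<le> K"
    and al: "\<And>k. \<bar>al k\<bar> \<le> 1"
  shows "\<exists>f\<in>Lip0 z0. lipnorm f \<le> K \<and> slopes u w f = al"
proof -
  obtain c where c: "\<And>n. QQ u w al (Ks n) n c" using values_exist[of u w Ks al, OF C Ks(1,2) al] by blast
  have K0: "K \<ge> 0" using Ks(2)[of 0] Ks(3)[of 0] by simp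
  define V where "V = (\<lambda>(s,i). vv u w al c s i)"
  define P where "P = (\<lambda>(s,i). pt u w s i)"
  have lip: "\<bar>V a - V b\<bar> \<le> K * dist (P a) (P b)" for a b
  proof -
    obtain s i t j where ab: "a = (s,i)" "b = (t,j)" by (cases a, cases b) auto
    define n where "n = Suc (max i j)"
    have "\<bar>V a - V b\<bar> \<le> Ks n * dist (P a) (P b)"
      using c[of n] unfolding QQ_def by (simp add: ab V_def P_def n_def less_Suc_eq_le)
    also have "\<dots> \<le> K * dist (P a) (P b)" using Ks(3) by (intro mult_right_mono) auto
    finally show ?thesis .
  qed
  obtain F where F: "K-lipschitz_on UNIV F" "\<And>a. F (P a) = V a" using mcshane[where P=P and V=V and K=K, OF lip K0] by blast
  define G where "G z = F z - F z0" for z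
  have GL: "dist (G a) (G b) \<le> K * dist a b" for a b
  proof -
    have "dist (F a) (F b) \<le> K * dist a b" by (rule lipschitz_onD[OF F(1)]) auto
    then show ?thesis by (simp add: G_def dist_real_def)
  qed
  have GLip: "K-lipschitz_on UNIV G" by (rule lipschitz_onI[OF _ K0]) (rule GL)
  have Gz: "G z0 = 0" by (simp add: G_def)
  have "G \<in> Lip0 z0" unfolding Lip0_def mem_Collect_eq using GLip Gz by blast
  moreover have "slopes u w G = al"
  proof
    fix k
    have "G (u k) - G (w k) = F (P (True,k)) - F (P (False,k))" by (simp add: G_def P_def pt_def)
    also have "\<dots> = al k * dist (u k) (w k)" by (simp add: F(2) V_def vv_def)
    finally show "slopes u w G k = al k" using ne[of k] by (simp add: slopes_def)
  qed
  moreover have "lipnorm G \<le> K"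
    unfolding lipnorm_def
  proof (rule cSUP_least)
    show "{(x, y). x \<noteq> y} \<noteq> ({} :: ('a \<times> 'a) set)" using ne[of 0] by auto
  next
    fix p :: "'a \<times> 'a" assume "p \<in> {(x, y). x \<noteq> y}"
    then have "dist (fst p) (snd p) > 0" by (cases p) simp
    then show "\<bar>G (fst p) - G (snd p)\<bar> / dist (fst p) (snd p) \<le> K"
      using GL[of "fst p" "snd p"] by (simp add: pos_divide_le_eq dist_real_def)
  qed
  ultimately show ?thesis by blast
qed

theorem theorem4p4:
  fixes z0 :: "'a::metric_space" and x y :: "nat \<Rightarrow> 'a" and \<epsilon> :: real
  assumes "\<And>n. x n \<noteq> y n"
    and "(\<lambda>n. dist (x n) (y n)) \<longlonglongrightarrow> 0"
    and "0 < \<epsilon>" and "\<epsilon> < 1"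
  shows "\<exists>r::nat \<Rightarrow> nat. strict_mono r \<and>
           lip_interpolating z0 (x \<circ> r) (y \<circ> r) \<and>
           lip_interp_const z0 (x \<circ> r) (y \<circ> r) \<le> 1 / (1 - \<epsilon>)"
proof -
  define K where "K = 1 / (1 - \<epsilon>)"
  have K1: "K > 1" using assms(3,4) by (simp add: K_def)
  define Ks where "Ks k = K - (K - 1) / 2 ^ k" for k :: nat
  have Ks_lt: "Ks k < Ks (Suc k)" for k
    using K1 by (simp add: Ks_def field_simps)
  have Ks_ge: "Ks k \<ge> 1" for k
  proof -
    have "(K - 1) / 2 ^ k \<le> K - 1" using K1 by (simp add: divide_le_eq)
    then show ?thesis by (simp add: Ks_def)
  qed
  have Ks_le: "Ks k \<le> K" for k using K1 by (simp add: Ks_def)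
  obtain r where r: "strict_mono r" "\<And>k. CC (x \<circ> r) (y \<circ> r) (Ks k) (Ks (Suc k)) k"
    using subseq_exists[of x y Ks, OF assms(2) Ks_lt Ks_ge] by blast
  have ne: "\<And>n. (x \<circ> r) n \<noteq> (y \<circ> r) n" using assms(1) by simp
  have core: "\<exists>f\<in>Lip0 z0. lipnorm f \<le> K \<and> slopes (x \<circ> r) (y \<circ> r) f = al"
    if "\<And>k. \<bar>al k\<bar> \<le> 1" for al
    using interp_core[of "x \<circ> r" "y \<circ> r" Ks K al z0, OF ne r(2) less_imp_le[OF Ks_lt] Ks_ge Ks_le that] .
  have interp: "lip_interpolating z0 (x \<circ> r) (y \<circ> r)"
    unfolding lip_interpolating_def
  proof (intro allI impI)
    fix al :: "nat \<Rightarrow> real" assume "\<exists>B. \<forall>k. \<bar>al k\<bar> \<le> B"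
    then obtain B where B: "\<And>k. \<bar>al k\<bar> \<le> B" by blast
    define B' where "B' = max B 1"
    have B'pos: "B' > 0" by (simp add: B'_def)
    have "\<bar>al k / B'\<bar> \<le> 1" for k
      using B[of k] B'pos by (simp add: abs_divide divide_le_eq B'_def)
    then obtain f where f: "f \<in> Lip0 z0" "slopes (x \<circ> r) (y \<circ> r) f = (\<lambda>k. al k / B')"
      using core[of "\<lambda>k. al k / B'"] by blast
    from f(1) obtain L where L: "L-lipschitz_on UNIV f" "f z0 = 0" by (auto simp: Lip0_def)
    have "(B' * L)-lipschitz_on UNIV (\<lambda>z. B' * f z)"
      using L(1) B'pos by (intro lipschitz_on_cmult_real_nonneg) auto
    then have "(\<lambda>z. B' * f z) \<in> Lip0 z0" using L(2) by (auto simp: Lip0_def)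
    moreover have "slopes (x \<circ> r) (y \<circ> r) (\<lambda>z. B' * f z) = al"
    proof
      fix k
      have "slopes (x \<circ> r) (y \<circ> r) f k = al k / B'" by (simp add: f(2))
      moreover have "slopes (x \<circ> r) (y \<circ> r) (\<lambda>z. B' * f z) k = B' * slopes (x \<circ> r) (y \<circ> r) f k"
        unfolding slopes_def by (simp add: right_diff_distrib)
      ultimately show "slopes (x \<circ> r) (y \<circ> r) (\<lambda>z. B' * f z) k = al k"
        using B'pos by simp
    qed
    ultimately show "\<exists>f\<in>Lip0 z0. slopes (x \<circ> r) (y \<circ> r) f = al" by blast
  qed
  have "lip_interp_const z0 (x \<circ> r) (y \<circ> r) \<le> K"
    unfolding lip_interp_const_def
  proof (rule cInf_lower)
    show "K \<in> {K. K \<ge> 1 \<and> (\<forall>\<alpha>::nat \<Rightarrow> real. (\<forall>k. \<bar>\<alpha> k\<bar> \<le> 1) \<longrightarrow>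
        (\<exists>f\<in>Lip0 z0. lipnorm f \<le> K \<and> slopes (x \<circ> r) (y \<circ> r) f = \<alpha>))}"
    proof (intro CollectI conjI allI impI)
      show "1 \<le> K" using K1 by simp
    next
      fix \<alpha> :: "nat \<Rightarrow> real" assume h: "\<forall>k. \<bar>\<alpha> k\<bar> \<le> 1"
      show "\<exists>f\<in>Lip0 z0. lipnorm f \<le> K \<and> slopes (x \<circ> r) (y \<circ> r) f = \<alpha>"
        by (rule core) (use h in blast)
    qed
    show "bdd_below {K. K \<ge> 1 \<and> (\<forall>\<alpha>::nat \<Rightarrow> real. (\<forall>k. \<bar>\<alpha> k\<bar> \<le> 1) \<longrightarrow>
        (\<exists>f\<in>Lip0 z0. lipnorm f \<le> K \<and> slopes (x \<circ> r) (y \<circ> r) f = \<alpha>))}"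
      by (rule bdd_belowI[of _ 1]) auto
  qed
  then show ?thesis using r(1) interp by (auto simp: K_def)
qed


end
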